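(* An infinite countable locally finite abelian group $A$ possesses an increasing sequence $(Y_n)_{n=1}^\infty$ of finite subsets, each of which is individually $4$-incompressible, such that $|Y_{n-1}|<|Y_n|\le2|Y_{n-1}|$ for all $n$.
   Context: A group is locally finite if every finitely generated subgroup is finite. A finite set $Y\subseteq A$ containing $0$ is individually $C$-incompressible if for every sequence of translates $\{Y+f_i\}_{i=1}^I$ with $f_i\notin\bigcup_{j<i}(Y+f_j)$ for all $i$, the number of sets $Y+f_i$ containing $0$ is at most $C$. *)

theory Defs
  imports Main "HOL-Library.Countable_Set"
begin

definition gen_subgroup :: "'a::ab_group_add set \<Rightarrow> 'a set" where
  "gen_subgroup S = \<Inter>{H. S \<subseteq> H \<and> 0 \<in> H \<and> (\<forall>x\<in>H. \<forall>y\<in>H. x + y \<in> H) \<and> (\<forall>x\<in>H. - x \<in> H)}"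

definition locally_finite_group :: "'a::ab_group_add itself \<Rightarrow> bool" where
  "locally_finite_group _ \<longleftrightarrow> (\<forall>S::'a set. finite S \<longrightarrow> finite (gen_subgroup S))"

definition translate :: "'a::ab_group_add set \<Rightarrow> 'a \<Rightarrow> 'a set" where
  "translate Y f = (\<lambda>y. y + f) ` Y"

definition indiv_incompressible :: "nat \<Rightarrow> 'a::ab_group_add set \<Rightarrow> bool" where
  "indiv_incompressible C Y \<longleftrightarrow> finite Y \<and> 0 \<in> Y \<and>
     (\<forall>(f::nat \<Rightarrow> 'a) (I::nat).
        (\<forall>i\<in>{1..I}. f i \<notin> (\<Union>j\<in>{1..<i}. translate Y (f j))) \<longrightarrow>
        card {i\<in>{1..I}. 0 \<in> translate Y (f i)} \<le> C)"

end

theory Submission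
  imports Defs
begin

fun nm :: "nat \<Rightarrow> 'a::ab_group_add \<Rightarrow> 'a" where
  "nm 0 g = 0"
| "nm (Suc n) g = g + nm n g"

lemma nm_add: "nm (m + n) g = nm m g + nm n g"
  by (induction m) (auto simp: add.assoc)

definition Mset :: "nat \<Rightarrow> 'a::ab_group_add \<Rightarrow> 'a set" where
  "Mset a g = (\<lambda>i. nm i g) ` {..a} \<union> (\<lambda>i. - nm i g) ` {..a}"

definition ssum :: "'a::ab_group_add set \<Rightarrow> 'a set \<Rightarrow> 'a set" where
  "ssum K A = (\<lambda>(k, x). k + x) ` (K \<times> A)"

definition subgrp :: "'a::ab_group_add set \<Rightarrow> bool" where
  "subgrp K \<longleftrightarrow> 0 \<in> K \<and> (\<forall>x\<in>K. \<forall>y\<in>K. x + y \<in> K) \<and> (\<forall>x\<in>K. - x \<in> K)"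

definition good :: "'a::ab_group_add set \<Rightarrow> bool" where
  "good X \<longleftrightarrow> (\<exists>K g a. subgrp K \<and> finite K \<and> (X = ssum K (Mset a g) \<or> X = ssum K {0, g}))"

lemma ssum_mem: "x \<in> ssum K A \<longleftrightarrow> (\<exists>k\<in>K. \<exists>a\<in>A. x = k + a)"
  unfolding ssum_def by force

lemma ssumI: "k \<in> K \<Longrightarrow> m \<in> A \<Longrightarrow> k + m \<in> ssum K A"
  unfolding ssum_def by (rule image_eqI[where x="(k, m)"]) auto

lemma finite_ssum: "finite K \<Longrightarrow> finite A \<Longrightarrow> finite (ssum K A)"
  unfolding ssum_def by auto

lemma card_ssum: "finite K \<Longrightarrow> finite A \<Longrightarrow> card (ssum K A) \<le> card K * card A"
  unfolding ssum_def by (metis card_cartesian_product card_image_le finite_cartesian_product)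

lemma finite_Mset: "finite (Mset a g)"
  unfolding Mset_def by auto

lemma incomp_pieces:
  fixes Y :: "'a::ab_group_add set" and P :: "nat \<Rightarrow> 'a set"
  assumes "finite Y" "0 \<in> Y" "Y \<subseteq> (\<Union>k<4. P k)"
    and diff: "\<And>k x y. k < 4 \<Longrightarrow> x \<in> P k \<Longrightarrow> y \<in> P k \<Longrightarrow> x - y \<in> Y"
  shows "indiv_incompressible 4 Y"
proof -
  show ?thesis unfolding indiv_incompressible_def
  proof (intro conjI assms(1,2) allI impI)
    fix f :: "nat \<Rightarrow> 'a" and I
    assume H: "\<forall>i\<in>{1..I}. f i \<notin> (\<Union>j\<in>{1..<i}. translate Y (f j))"
    let ?S = "{i\<in>{1..I}. 0 \<in> translate Y (f i)}"
    have mem: "- f i \<in> Y" if "i \<in> ?S" for i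
    proof -
      from that obtain y where "y \<in> Y" "0 = y + f i" by (auto simp: translate_def)
      then have "y = - f i" by (metis add.commute add_eq_0_iff)
      then show ?thesis using \<open>y \<in> Y\<close> by simp
    qed
    define \<phi> where "\<phi> i = (SOME k. k < 4 \<and> - f i \<in> P k)" for i
    have \<phi>: "\<phi> i < 4 \<and> - f i \<in> P (\<phi> i)" if "i \<in> ?S" for i
      unfolding \<phi>_def by (rule someI_ex) (use mem[OF that] assms(3) in blast)
    have no: False if i: "i \<in> ?S" and j: "j \<in> ?S" and e: "\<phi> i = \<phi> j" and ij: "i < j" for i j
    proof -
      have "(- f i) - (- f j) \<in> Y" using diff \<phi>[OF i] \<phi>[OF j] e by metis
      hence "f j \<in> translate Y (f i)" unfolding translate_def
        by (rule rev_image_eqI) (simp add: algebra_simps)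
      moreover have "i \<in> {1..<j}" using i ij by auto
      ultimately show False using H j by auto
    qed
    have "inj_on \<phi> ?S"
    proof (rule inj_onI)
      fix i j assume i: "i \<in> ?S" and j: "j \<in> ?S" and e: "\<phi> i = \<phi> j"
      show "i = j"
      proof (rule ccontr)
        assume "i \<noteq> j"
        then consider "i < j" | "j < i" by linarith
        then show False
          by cases (use no[OF i j e] no[OF j i e[symmetric]] in auto)
      qed
    qed
    moreover have "\<phi> ` ?S \<subseteq> {..<4}" using \<phi> by auto
    ultimately have "card ?S \<le> card {..<4::nat}" by (intro card_inj_on_le) auto
    thus "card {i\<in>{1..I}. 0 \<in> translate Y (f i)} \<le> 4" by simp
  qed
qed

lemma nm_diff: "i \<le> a \<Longrightarrow> j \<le> a \<Longrightarrow> nm i g - nm j g \<in> Mset a g"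
proof (cases "j \<le> i")
  case True
  assume "i \<le> a"
  have "nm i g = nm j g + nm (i - j) g" using True nm_add[of j "i - j" g] by simp
  then show ?thesis using \<open>i \<le> a\<close> unfolding Mset_def by (auto simp: algebra_simps)
next
  case False
  assume "j \<le> a"
  have "nm j g = nm i g + nm (j - i) g" using False nm_add[of i "j - i" g] by simp
  then show ?thesis using \<open>j \<le> a\<close> unfolding Mset_def
    by (intro UnI2 image_eqI[where x="j - i"]) (auto simp: algebra_simps)
qed

lemma good_incomp:
  assumes "good (X::'a::ab_group_add set)"
  shows "finite X \<and> 0 \<in> X \<and> indiv_incompressible 4 X"
proof -
  obtain K g a where K: "subgrp K" "finite K" and X: "X = ssum K (Mset a g) \<or> X = ssum K {0, g}"
    using assms unfolding good_def by blast
  have K0: "0 \<in> K" using K(1) unfolding subgrp_def by blast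
  have Kd: "x - y \<in> K" if "x \<in> K" "y \<in> K" for x y
  proof -
    have "- y \<in> K" using K(1) that unfolding subgrp_def by blast
    then have "x + - y \<in> K" using K(1) that unfolding subgrp_def by blast
    then show ?thesis by simp
  qed
  from X show ?thesis
  proof
    assume X: "X = ssum K (Mset a g)"
    have fin: "finite X" using X finite_ssum[OF K(2) finite_Mset] by simp
    have "0 \<in> Mset a g" unfolding Mset_def by (rule UnI1, rule image_eqI[where x=0]) auto
    then have z: "0 \<in> X" unfolding X using ssumI[OF K0] by fastforce
    define P where "P k = (if k = 0 then ssum K ((\<lambda>i. nm i g) ` {..a})
       else if k = 1 then ssum K ((\<lambda>i. - nm i g) ` {..a}) else {0})" for k :: nat
    have cov: "X \<subseteq> (\<Union>k<4. P k)"
    proof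
      fix x assume "x \<in> X"
      then have "x \<in> P 0 \<or> x \<in> P 1" unfolding X P_def Mset_def by (auto simp: ssum_mem) (use atMost_iff in blast)
      then show "x \<in> (\<Union>k<4. P k)" by force
    qed
    have d: "x - y \<in> X" if kk: "k < 4" and xP: "x \<in> P k" and yP: "y \<in> P k" for k x y
    proof -
      consider "k = 0" | "k = 1" | "k \<noteq> 0 \<and> k \<noteq> 1" by blast
      then show ?thesis
      proof cases
        case 1
        then obtain k1 i k2 j where "k1 \<in> K" "k2 \<in> K" "i \<le> a" "j \<le> a"
          "x = k1 + nm i g" "y = k2 + nm j g" using xP yP unfolding P_def by (auto simp: ssum_mem)
        moreover have "x - y = (k1 - k2) + (nm i g - nm j g)" using calculation by (simp add: algebra_simps)
        ultimately show ?thesis unfolding X using ssumI[OF Kd nm_diff] by metis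
      next
        case 2
        then obtain k1 i k2 j where "k1 \<in> K" "k2 \<in> K" "i \<le> a" "j \<le> a"
          "x = k1 + - nm i g" "y = k2 + - nm j g" using xP yP unfolding P_def by (auto simp: ssum_mem)
        moreover have "x - y = (k1 - k2) + (nm j g - nm i g)" using calculation by (simp add: algebra_simps)
        ultimately show ?thesis unfolding X using ssumI[OF Kd nm_diff] by metis
      next
        case 3
        then show ?thesis using xP yP z unfolding P_def by auto
      qed
    qed
    have "indiv_incompressible 4 X" by (rule incomp_pieces[OF fin z cov]) (use d in blast)
    then show ?thesis using fin z by blast
  next
    assume X: "X = ssum K {0, g}"
    have fin: "finite X" using X finite_ssum[OF K(2)] by simp
    have z: "0 \<in> X" unfolding X using ssumI[OF K0, of 0 "{0,g}"] by simp
    define P where "P k = (if k = 0 then K else if k = 1 then ssum K {g} else {0})" for k :: nat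
    have cov: "X \<subseteq> (\<Union>k<4. P k)"
    proof
      fix x assume "x \<in> X"
      then have "x \<in> P 0 \<or> x \<in> P 1" unfolding X P_def by (auto simp: ssum_mem)
      then show "x \<in> (\<Union>k<4. P k)" by force
    qed
    have d: "x - y \<in> X" if kk: "k < 4" and xP: "x \<in> P k" and yP: "y \<in> P k" for k x y
    proof -
      consider "k = 0" | "k = 1" | "k \<noteq> 0 \<and> k \<noteq> 1" by blast
      then show ?thesis
      proof cases
        case 1
        then have "x - y \<in> K" using xP yP Kd unfolding P_def by auto
        then show ?thesis unfolding X using ssumI[of "x - y" K 0 "{0,g}"] by simp
      next
        case 2
        then obtain k1 k2 where "k1 \<in> K" "k2 \<in> K" "x = k1 + g" "y = k2 + g"
          using xP yP unfolding P_def by (auto simp: ssum_mem)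
        then have "x - y \<in> K" using Kd by simp
        then show ?thesis unfolding X using ssumI[of "x - y" K 0 "{0,g}"] by simp
      next
        case 3
        then show ?thesis using xP yP z unfolding P_def by auto
      qed
    qed
    have "indiv_incompressible 4 X" by (rule incomp_pieces[OF fin z cov]) (use d in blast)
    then show ?thesis using fin z by blast
  qed
qed


lemma Mset0: "Mset 0 g = {0}"
  unfolding Mset_def by auto

lemma ssum_zero: "ssum K {0} = K"
proof
  show "ssum K {0} \<subseteq> K" unfolding ssum_def by auto
  show "K \<subseteq> ssum K {0}" using ssumI[of _ K 0 "{0}"] by auto
qed

lemma Mset_mono: "a \<le> b \<Longrightarrow> Mset a g \<subseteq> Mset b g"
  unfolding Mset_def by auto

lemma ssum_mono2: "A \<subseteq> B \<Longrightarrow> ssum K A \<subseteq> ssum K B"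
  unfolding ssum_def by auto

lemma L1:
  assumes inf: "infinite (UNIV::'a::ab_group_add set)" and sg: "subgrp (X::'a set)" and fin: "finite X"
  shows "\<exists>X'. good X' \<and> X \<subset> X' \<and> card X' \<le> 2 * card X"
proof -
  obtain e where e: "e \<notin> X" using ex_new_if_finite[OF inf fin] by blast
  let ?X' = "ssum X {0, e}"
  have "good ?X'" unfolding good_def using sg fin by blast
  moreover have "X \<subseteq> ?X'"
  proof
    fix x assume "x \<in> X" then show "x \<in> ?X'" using ssumI[of x X 0 "{0,e}"] by simp
  qed
  moreover have "e \<in> ?X'" using ssumI[of 0 X e "{0,e}"] sg by (simp add: subgrp_def)
  moreover have "card ?X' \<le> 2 * card X"
  proof -
    have "card {0::'a, e} \<le> 2" by (simp add: card_insert_if)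
    then have "card X * card {0, e} \<le> card X * 2" by simp
    moreover have "card ?X' \<le> card X * card {0,e}" by (rule card_ssum[OF fin]) simp
    ultimately show ?thesis by (metis le_trans mult.commute)
  qed
  ultimately show ?thesis using e by blast
qed

lemma Mset_cases:
  assumes "m \<in> Mset a g"
  obtains i where "i \<le> a" "m = nm i g" | i where "i \<le> a" "m = - nm i g"
  using assms unfolding Mset_def by auto

lemma Mset_pos: "i \<le> a \<Longrightarrow> nm i g \<in> Mset a g"
  unfolding Mset_def by auto

lemma Mset_neg: "i \<le> a \<Longrightarrow> - nm i g \<in> Mset a g"
  unfolding Mset_def by auto

lemma ssum_cases:
  assumes "x \<in> ssum K A"
  obtains k m where "k \<in> K" "m \<in> A" "x = k + m"
  using assms unfolding ssum_mem by blast

lemma L3: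
  assumes inf: "infinite (UNIV::'a::ab_group_add set)" and sg: "subgrp K" and fin: "finite K"
    and a: "1 \<le> a" and X: "X = ssum K (Mset a (g::'a))"
  shows "\<exists>X'. good X' \<and> X \<subset> X' \<and> card X' \<le> 2 * card X"
proof (cases "ssum K (Mset (Suc a) g) = X")
  case True
  have finX: "finite X" using X finite_ssum[OF fin finite_Mset] by simp
  have nm1: "nm 1 g = g" by simp
  have plus: "x + g \<in> X" if xX: "x \<in> X" for x
  proof -
    obtain k m where km: "k \<in> K" "m \<in> Mset a g" "x = k + m" using xX unfolding X by (rule ssum_cases)
    from km(2) show ?thesis
    proof (cases rule: Mset_cases)
      case (1 i)
      have "x + g = k + nm (Suc i) g" using km 1 by (simp add: algebra_simps)
      then show ?thesis using ssumI[OF km(1) Mset_pos[of "Suc i" "Suc a" g]] 1 True by (simp del: nm.simps)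
    next
      case (2 i)
      show ?thesis
      proof (cases i)
        case 0
        have "x + g = k + nm 1 g" using km 2 0 by (simp add: algebra_simps)
        then show ?thesis using ssumI[OF km(1) Mset_pos[of 1 a g]] a X by (simp del: nm.simps)
      next
        case (Suc j)
        have "x + g = k + - nm j g" using km 2 Suc by (simp add: algebra_simps)
        then show ?thesis using ssumI[OF km(1) Mset_neg[of j a g]] 2 Suc X by (simp del: nm.simps)
      qed
    qed
  qed
  have minus: "x + - g \<in> X" if xX: "x \<in> X" for x
  proof -
    obtain k m where km: "k \<in> K" "m \<in> Mset a g" "x = k + m" using xX unfolding X by (rule ssum_cases)
    from km(2) show ?thesis
    proof (cases rule: Mset_cases)
      case (2 i)
      have "x + - g = k + - nm (Suc i) g" using km 2 by (simp add: algebra_simps)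
      then show ?thesis using ssumI[OF km(1) Mset_neg[of "Suc i" "Suc a" g]] 2 True by (simp del: nm.simps)
    next
      case (1 i)
      show ?thesis
      proof (cases i)
        case 0
        have "x + - g = k + - nm 1 g" using km 1 0 by (simp add: algebra_simps)
        then show ?thesis using ssumI[OF km(1) Mset_neg[of 1 a g]] a X by (simp del: nm.simps)
      next
        case (Suc j)
        have "x + - g = k + nm j g" using km 1 Suc by (simp add: algebra_simps)
        then show ?thesis using ssumI[OF km(1) Mset_pos[of j a g]] 1 Suc X by (simp del: nm.simps)
      qed
    qed
  qed
  have iter: "x + nm i g \<in> X \<and> x + - nm i g \<in> X" if "x \<in> X" for x i
  proof (induction i)
    case 0 then show ?case using that by simp
  next
    case (Suc i)
    have "x + nm (Suc i) g = (x + nm i g) + g" by (simp add: algebra_simps)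
    moreover have "x + - nm (Suc i) g = (x + - nm i g) + - g" by (simp add: algebra_simps)
    moreover have "(x + nm i g) + g \<in> X" using plus Suc by blast
    moreover have "(x + - nm i g) + - g \<in> X" using minus Suc by simp
    ultimately show ?case by (simp only:)
  qed
  have Mcl: "x + m \<in> X" if "x \<in> X" "m \<in> Mset a g" for x m
    using that(2) by (cases rule: Mset_cases) (use iter[OF that(1)] in auto)
  have Kcl: "x + k \<in> X" if xX: "x \<in> X" and kK: "k \<in> K" for x k
  proof -
    obtain k' m where km: "k' \<in> K" "m \<in> Mset a g" "x = k' + m" using xX unfolding X by (rule ssum_cases)
    have "k' + k \<in> K" using sg km(1) kK unfolding subgrp_def by blast
    then have "(k' + k) + m \<in> X" using ssumI[OF _ km(2)] X by blast
    moreover have "x + k = (k' + k) + m" using km by (simp add: algebra_simps)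
    ultimately show ?thesis by (simp only:)
  qed
  have "subgrp X" unfolding subgrp_def
  proof (intro conjI ballI)
    show "0 \<in> X" using ssumI[of 0 K 0 "Mset a g"] sg Mset_pos[of 0 a g] X by (simp add: subgrp_def)
  next
    fix x y assume x: "x \<in> X" and y: "y \<in> X"
    obtain k m where km: "k \<in> K" "m \<in> Mset a g" "y = k + m" using y unfolding X by (rule ssum_cases)
    have "x + y = (x + k) + m" using km by (simp add: algebra_simps)
    then show "x + y \<in> X" using Mcl[OF Kcl[OF x km(1)] km(2)] by (simp add: add.assoc)
  next
    fix x assume x: "x \<in> X"
    obtain k m where km: "k \<in> K" "m \<in> Mset a g" "x = k + m" using x unfolding X by (rule ssum_cases)
    have nk: "- k \<in> K" using sg km(1) unfolding subgrp_def by blast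
    have nm: "- m \<in> Mset a g" using km(2) by (cases rule: Mset_cases) (auto intro: Mset_pos Mset_neg)
    have "- x = - k + - m" using km by (simp add: algebra_simps)
    then show "- x \<in> X" using ssumI[OF nk nm] X by simp
  qed
  then show ?thesis using L1[OF inf _ finX] by blast
next
  case False
  let ?X' = "ssum K (Mset (Suc a) g)"
  have "good ?X'" unfolding good_def using sg fin by blast
  moreover have "X \<subset> ?X'" using False X ssum_mono2[OF Mset_mono[of a "Suc a" g]] by auto
  moreover have "card ?X' \<le> 2 * card X"
  proof -
    have finX: "finite X" using X finite_ssum[OF fin finite_Mset] by simp
    have sub: "?X' \<subseteq> (\<lambda>x. x + g) ` X \<union> (\<lambda>x. x + - g) ` X"
    proof
      fix y assume "y \<in> ?X'"
      then obtain k m where km: "k \<in> K" "m \<in> Mset (Suc a) g" "y = k + m" by (rule ssum_cases)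
      from km(2) show "y \<in> (\<lambda>x. x + g) ` X \<union> (\<lambda>x. x + - g) ` X"
      proof (cases rule: Mset_cases)
        case (1 i)
        show ?thesis
        proof (cases i)
          case 0
          have "k + - nm 1 g \<in> X" using ssumI[OF km(1) Mset_neg[of 1 a g]] a X by simp
          moreover have "y = (k + - nm 1 g) + g" using km 1 0 by (simp add: algebra_simps)
          ultimately show ?thesis by blast
        next
          case (Suc j)
          have "k + nm j g \<in> X" using ssumI[OF km(1) Mset_pos[of j a g]] 1 Suc X by simp
          moreover have "y = (k + nm j g) + g" using km 1 Suc by (simp add: algebra_simps)
          ultimately show ?thesis by blast
        qed
      next
        case (2 i)
        show ?thesis
        proof (cases i)
          case 0
          have "k + nm 1 g \<in> X" using ssumI[OF km(1) Mset_pos[of 1 a g]] a X by simp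
          moreover have "y = (k + nm 1 g) + - g" using km 2 0 by (simp add: algebra_simps)
          ultimately show ?thesis by blast
        next
          case (Suc j)
          have "k + - nm j g \<in> X" using ssumI[OF km(1) Mset_neg[of j a g]] 2 Suc X by simp
          moreover have "y = (k + - nm j g) + - g" using km 2 Suc by (simp add: algebra_simps)
          ultimately show ?thesis by blast
        qed
      qed
    qed
    have "card ?X' \<le> card ((\<lambda>x. x + g) ` X \<union> (\<lambda>x. x + - g) ` X)"
      by (rule card_mono) (use finX sub in auto)
    also have "\<dots> \<le> card ((\<lambda>x. x + g) ` X) + card ((\<lambda>x. x + - g) ` X)" by (rule card_Un_le)
    also have "\<dots> \<le> card X + card X" by (intro add_mono card_image_le finX)
    finally show ?thesis by simp
  qed
  ultimately show ?thesis by blast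
qed


lemma L2:
  assumes inf: "infinite (UNIV::'a::ab_group_add set)" and sg: "subgrp K" and fin: "finite K"
    and X: "X = ssum K {0, g::'a}"
  shows "\<exists>X'. good X' \<and> X \<subset> X' \<and> card X' \<le> 2 * card X"
proof (cases "g \<in> K")
  case True
  have "X = K"
  proof
    show "X \<subseteq> K"
    proof
      fix x assume "x \<in> X"
      then obtain k m where "k \<in> K" "m \<in> {0, g}" "x = k + m" unfolding X by (rule ssum_cases)
      then show "x \<in> K" using True sg unfolding subgrp_def by auto
    qed
    show "K \<subseteq> X"
    proof
      fix x assume "x \<in> K"
      then have "x + 0 \<in> ssum K {0,g}" by (rule ssumI) simp
      then show "x \<in> X" using X by simp
    qed
  qed
  then show ?thesis using L1[OF inf sg fin] by simp
next
  case gK: False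
  have M1: "Mset 1 g \<subseteq> {0, g, - g}" unfolding Mset_def by (auto simp: le_Suc_eq)
  have M1': "{0, g} \<subseteq> Mset 1 g" using Mset_pos[of 0 1 g] Mset_pos[of 1 1 g] by simp
  show ?thesis
  proof (cases "ssum K (Mset 1 g) = X")
    case True
    then show ?thesis using L3[OF inf sg fin _ True[symmetric]] by simp
  next
    case False
    let ?X' = "ssum K (Mset 1 g)"
    have "good ?X'" unfolding good_def using sg fin by blast
    moreover have "X \<subset> ?X'" using False X ssum_mono2[OF M1'] by auto
    moreover have "card ?X' \<le> 2 * card X"
    proof -
      have "card (Mset 1 g) \<le> card {0, g, - g}" by (rule card_mono) (use M1 in auto)
      also have "\<dots> \<le> 3" by (simp add: card_insert_if)
      finally have "card K * card (Mset 1 g) \<le> card K * 3" by simp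
      then have c1: "card ?X' \<le> card K * 3" using card_ssum[OF fin finite_Mset, of 1 g] by linarith
      have XU: "X = K \<union> (\<lambda>k. k + g) ` K"
      proof
        show "X \<subseteq> K \<union> (\<lambda>k. k + g) ` K"
        proof
          fix x assume "x \<in> X"
          then obtain k m where "k \<in> K" "m \<in> {0, g}" "x = k + m" unfolding X by (rule ssum_cases)
          then show "x \<in> K \<union> (\<lambda>k. k + g) ` K" by auto
        qed
        show "K \<union> (\<lambda>k. k + g) ` K \<subseteq> X" using ssumI[of _ K 0 "{0,g}"] ssumI[of _ K g "{0,g}"] X by auto
      qed
      have disj: "K \<inter> (\<lambda>k. k + g) ` K = {}"
      proof (rule ccontr)
        assume "K \<inter> (\<lambda>k. k + g) ` K \<noteq> {}"
        then obtain k where k: "k \<in> K" "k + g \<in> K" by auto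
        have "- k \<in> K" using sg k(1) unfolding subgrp_def by blast
        then have "- k + (k + g) \<in> K" using sg k(2) unfolding subgrp_def by blast
        then show False using gK by (simp add: add.assoc[symmetric])
      qed
      have "card X = card K + card ((\<lambda>k. k + g) ` K)"
        unfolding XU by (rule card_Un_disjoint) (use fin disj in auto)
      also have "card ((\<lambda>k. k + g) ` K) = card K" by (rule card_image) (simp add: inj_on_def)
      finally show ?thesis using c1 by linarith
    qed
    ultimately show ?thesis by blast
  qed
qed

lemma step:
  assumes inf: "infinite (UNIV::'a::ab_group_add set)" and "good (X::'a set)"
  shows "\<exists>X'. good X' \<and> X \<subset> X' \<and> card X' \<le> 2 * card X"
proof -
  obtain K g a where K: "subgrp K" "finite K" and X: "X = ssum K (Mset a g) \<or> X = ssum K {0, g}"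
    using assms(2) unfolding good_def by blast
  from X show ?thesis
  proof
    assume X: "X = ssum K (Mset a g)"
    show ?thesis
    proof (cases a)
      case 0
      then have "X = K" using X by (simp add: Mset0 ssum_zero)
      then show ?thesis using L1[OF inf K] by simp
    next
      case (Suc b)
      then show ?thesis using L3[OF inf K _ X] by simp
    qed
  next
    assume X: "X = ssum K {0, g}"
    show ?thesis using L2[OF inf K X] .
  qed
qed

theorem proposition2p11:
  assumes "infinite (UNIV :: 'a::ab_group_add set)"
    and "countable (UNIV :: 'a set)"
    and "locally_finite_group TYPE('a)"
  shows "\<exists>Y :: nat \<Rightarrow> 'a set.
           (\<forall>n\<ge>1. finite (Y n) \<and> indiv_incompressible 4 (Y n)) \<and>
           (\<forall>n\<ge>2. Y (n - 1) \<subseteq> Y n \<and> card (Y (n - 1)) < card (Y n) \<and>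
                   card (Y n) \<le> 2 * card (Y (n - 1)))"
proof -
  define nx :: "'a set \<Rightarrow> 'a set" where
    "nx X = (SOME X'. good X' \<and> X \<subset> X' \<and> card X' \<le> 2 * card X)" for X
  define Y :: "nat \<Rightarrow> 'a set" where "Y n = (nx ^^ n) {0}" for n
  have nxg: "good (nx X) \<and> X \<subset> nx X \<and> card (nx X) \<le> 2 * card X" if "good X" for X
    unfolding nx_def by (rule someI_ex) (rule step[OF assms(1) that])
  have g0: "good ({0}::'a set)"
  proof -
    have "subgrp ({0}::'a set)" unfolding subgrp_def by simp
    moreover have "({0}::'a set) = ssum {0} (Mset 0 (0::'a))" by (simp add: Mset0 ssum_zero)
    ultimately show ?thesis unfolding good_def by blast
  qed
  have gY: "good (Y n)" for n
    by (induction n) (auto simp: Y_def g0 nxg)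
  have YS: "Y (Suc n) = nx (Y n)" for n by (simp add: Y_def)
  show ?thesis
  proof (intro exI[of _ Y] conjI allI impI)
    fix n :: nat
    show "finite (Y n)" using good_incomp[OF gY] by blast
    show "indiv_incompressible 4 (Y n)" using good_incomp[OF gY] by blast
  next
    fix n :: nat assume "2 \<le> n"
    then obtain m where n: "n = Suc m" by (cases n) auto
    have P: "good (Y n) \<and> Y m \<subset> Y n \<and> card (Y n) \<le> 2 * card (Y m)"
      unfolding n YS by (rule nxg[OF gY])
    have fin: "finite (Y n)" using good_incomp[OF gY] by blast
    show "Y (n - 1) \<subseteq> Y n" using P n by auto
    show "card (Y (n - 1)) < card (Y n)" using P n psubset_card_mono[OF fin] by auto
    show "card (Y n) \<le> 2 * card (Y (n - 1))" using P n by auto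
  qed
qed

end
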